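(* Every HCA graph with at least one edge contains an essential edge.
   Context: An HCA (Helly circular-arc) graph is a graph $G$ admitting a map $\alpha$ from $V(G)$ to arcs of a discrete circle (sets of consecutive points of a directed cycle) such that distinct vertices $u,v$ are adjacent iff $\alpha(u)\cap\alpha(v)\ne\emptyset$, and the family of arcs has the Helly property (every pairwise intersecting subfamily has a common point). A maxclique is an inclusion-maximal clique; an edge is essential if it is contained in exactly one maxclique. *)

theory Defs
  imports Main
begin

definition simple_graph :: "'v set \<Rightarrow> ('v \<Rightarrow> 'v \<Rightarrow> bool) \<Rightarrow> bool" where
  "simple_graph V E \<longleftrightarrow> finite V \<and> (\<forall>u\<in>V. \<forall>v\<in>V. E u v \<longleftrightarrow> E v u) \<and> (\<forall>v\<in>V. \<not> E v v)"

definition clique :: "'v set \<Rightarrow> ('v \<Rightarrow> 'v \<Rightarrow> bool) \<Rightarrow> 'v set \<Rightarrow> bool" where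
  "clique V E C \<longleftrightarrow> C \<subseteq> V \<and> (\<forall>u\<in>C. \<forall>v\<in>C. u \<noteq> v \<longrightarrow> E u v)"

definition maxclique :: "'v set \<Rightarrow> ('v \<Rightarrow> 'v \<Rightarrow> bool) \<Rightarrow> 'v set \<Rightarrow> bool" where
  "maxclique V E C \<longleftrightarrow> clique V E C \<and> (\<forall>D. clique V E D \<and> C \<subseteq> D \<longrightarrow> D = C)"

definition essential_edge :: "'v set \<Rightarrow> ('v \<Rightarrow> 'v \<Rightarrow> bool) \<Rightarrow> 'v \<Rightarrow> 'v \<Rightarrow> bool" where
  "essential_edge V E u v \<longleftrightarrow> u \<in> V \<and> v \<in> V \<and> E u v \<and>
     (\<exists>!C. maxclique V E C \<and> u \<in> C \<and> v \<in> C)"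

text \<open>The discrete circle with n points is {0..<n} with successor i \<mapsto> (i+1) mod n.
An arc is a nonempty set of consecutive points: starting at s, of length k+1 \<le> n.\<close>
definition is_arc :: "nat \<Rightarrow> nat set \<Rightarrow> bool" where
  "is_arc n A \<longleftrightarrow> (\<exists>s<n. \<exists>k<n. A = {(s + i) mod n | i. i \<le> k})"

definition helly_family :: "nat \<Rightarrow> 'v set \<Rightarrow> ('v \<Rightarrow> nat set) \<Rightarrow> bool" where
  "helly_family n V \<alpha> \<longleftrightarrow>
     (\<forall>F \<subseteq> V. (\<forall>u\<in>F. \<forall>v\<in>F. \<alpha> u \<inter> \<alpha> v \<noteq> {}) \<longrightarrow> (\<exists>p<n. \<forall>v\<in>F. p \<in> \<alpha> v))"

definition HCA_model :: "'v set \<Rightarrow> ('v \<Rightarrow> 'v \<Rightarrow> bool) \<Rightarrow> nat \<Rightarrow> ('v \<Rightarrow> nat set) \<Rightarrow> bool" where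
  "HCA_model V E n \<alpha> \<longleftrightarrow> 0 < n \<and> (\<forall>v\<in>V. is_arc n (\<alpha> v)) \<and>
     (\<forall>u\<in>V. \<forall>v\<in>V. u \<noteq> v \<longrightarrow> (E u v \<longleftrightarrow> \<alpha> u \<inter> \<alpha> v \<noteq> {})) \<and>
     helly_family n V \<alpha>"

definition HCA_graph :: "'v set \<Rightarrow> ('v \<Rightarrow> 'v \<Rightarrow> bool) \<Rightarrow> bool" where
  "HCA_graph V E \<longleftrightarrow> simple_graph V E \<and> (\<exists>n \<alpha>. HCA_model V E n \<alpha>)"

end

theory Submission
  imports Defs
begin

lemma mod_shift:
  fixes a b d n :: nat
  assumes "(a + d) mod n = (b + d) mod n"
  shows "a mod n = b mod n"
proof -
  have "int a mod int n = int b mod int n"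
  proof -
    have "(int a + int d) mod int n = (int b + int d) mod int n"
      using assms by (metis of_nat_add zmod_int)
    then have "((int a + int d) - int d) mod int n = ((int b + int d) - int d) mod int n"
      by (metis mod_diff_left_eq)
    then show ?thesis by simp
  qed
  then show ?thesis by (metis of_nat_eq_iff zmod_int)
qed

lemma arc_coint:
  fixes n s s' k k' j :: nat
  assumes kk: "k \<le> k'"
    and j: "j \<le> k" "(s + j) mod n \<in> {(s' + i) mod n | i. i \<le> k'}"
  shows "(\<forall>i\<le>j. (s + i) mod n \<in> {(s' + i) mod n | i. i \<le> k'})
       \<or> (\<forall>i. j \<le> i \<and> i \<le> k \<longrightarrow> (s + i) mod n \<in> {(s' + i) mod n | i. i \<le> k'})"
proof -
  from j obtain m where m: "m \<le> k'" "(s + j) mod n = (s' + m) mod n" by auto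
  show ?thesis
  proof (cases "j \<le> m")
    case True
    have "\<forall>i\<le>j. (s + i) mod n \<in> {(s' + i) mod n | i. i \<le> k'}"
    proof (intro allI impI)
      fix i assume i: "i \<le> j"
      have "(s + i + (j - i)) mod n = (s' + (m - (j - i)) + (j - i)) mod n"
        using m True i by simp
      then have "(s + i) mod n = (s' + (m - (j - i))) mod n" by (rule mod_shift)
      moreover have "m - (j - i) \<le> k'" using m by simp
      ultimately show "(s + i) mod n \<in> {(s' + i) mod n | i. i \<le> k'}" by blast
    qed
    then show ?thesis by blast
  next
    case False
    have "\<forall>i. j \<le> i \<and> i \<le> k \<longrightarrow> (s + i) mod n \<in> {(s' + i) mod n | i. i \<le> k'}"
    proof (intro allI impI)
      fix i assume i: "j \<le> i \<and> i \<le> k"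
      have "(s + i) mod n = ((s + j) + (i - j)) mod n" using i by simp
      also have "\<dots> = ((s + j) mod n + (i - j)) mod n" by (simp add: mod_add_left_eq)
      also have "\<dots> = ((s' + m) mod n + (i - j)) mod n" using m by simp
      also have "\<dots> = (s' + (m + (i - j))) mod n" by (simp add: mod_add_left_eq add.assoc)
      finally have "(s + i) mod n = (s' + (m + (i - j))) mod n" .
      moreover have "m + (i - j) \<le> k'" using False i kk by linarith
      ultimately show "(s + i) mod n \<in> {(s' + i) mod n | i. i \<le> k'}" by blast
    qed
    then show ?thesis by blast
  qed
qed

lemma disj_coint:
  fixes T1 T2 :: "nat set" and k :: nat
  assumes "T1 \<subseteq> {..k}" "T2 \<subseteq> {..k}" "T1 \<noteq> {}" "T2 \<noteq> {}"
    and c1: "\<And>j. j \<in> T1 \<Longrightarrow> (\<forall>i\<le>j. i \<in> T1) \<or> (\<forall>i. j \<le> i \<and> i \<le> k \<longrightarrow> i \<in> T1)"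
    and c2: "\<And>j. j \<in> T2 \<Longrightarrow> (\<forall>i\<le>j. i \<in> T2) \<or> (\<forall>i. j \<le> i \<and> i \<le> k \<longrightarrow> i \<in> T2)"
    and d: "T1 \<inter> T2 = {}"
  shows "(0 \<in> T1 \<and> k \<notin> T1 \<and> k \<in> T2 \<and> 0 \<notin> T2) \<or> (0 \<in> T2 \<and> k \<notin> T2 \<and> k \<in> T1 \<and> 0 \<notin> T1)"
proof -
  have e1: "0 \<in> T1 \<or> k \<in> T1"
  proof -
    obtain j where "j \<in> T1" using assms(3) by blast
    moreover have "j \<le> k" using assms(1) \<open>j \<in> T1\<close> by auto
    ultimately show ?thesis using c1 by blast
  qed
  have e2: "0 \<in> T2 \<or> k \<in> T2"
  proof -
    obtain j where "j \<in> T2" using assms(4) by blast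
    moreover have "j \<le> k" using assms(2) \<open>j \<in> T2\<close> by auto
    ultimately show ?thesis using c2 by blast
  qed
  show ?thesis using e1 e2 d by blast
qed

theorem lemma16:
  fixes V :: "'v set" and E :: "'v \<Rightarrow> 'v \<Rightarrow> bool"
  assumes "HCA_graph V E"
    and "\<exists>u\<in>V. \<exists>v\<in>V. E u v"
  shows "\<exists>u\<in>V. \<exists>v\<in>V. essential_edge V E u v"
proof -
  from assms(1) obtain n \<alpha> where sg: "simple_graph V E" and M: "HCA_model V E n \<alpha>"
    unfolding HCA_graph_def by blast
  have sym: "\<And>a b. a\<in>V \<Longrightarrow> b\<in>V \<Longrightarrow> E a b \<longleftrightarrow> E b a"
    and irr: "\<And>a. a\<in>V \<Longrightarrow> \<not> E a a" using sg unfolding simple_graph_def by auto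
  have arcs: "\<And>x. x\<in>V \<Longrightarrow> is_arc n (\<alpha> x)"
    and adj: "\<And>a b. a\<in>V \<Longrightarrow> b\<in>V \<Longrightarrow> a\<noteq>b \<Longrightarrow> E a b \<longleftrightarrow> \<alpha> a \<inter> \<alpha> b \<noteq> {}"
    and helly: "helly_family n V \<alpha>" using M unfolding HCA_model_def by auto
  have ane: "\<And>x. x\<in>V \<Longrightarrow> \<alpha> x \<noteq> {}"
  proof -
    fix x assume "x \<in> V"
    then obtain s k where "\<alpha> x = {(s + i) mod n | i. i \<le> k}" using arcs unfolding is_arc_def by blast
    then have "(s + 0) mod n \<in> \<alpha> x" by blast
    then show "\<alpha> x \<noteq> {}" by blast
  qed
  have adj2: "\<And>a b. a\<in>V \<Longrightarrow> b\<in>V \<Longrightarrow> E a b \<Longrightarrow> \<alpha> a \<inter> \<alpha> b \<noteq> {} \<and> \<alpha> b \<inter> \<alpha> a \<noteq> {}"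
    using adj irr by (metis Int_commute)
  define P where "P k \<longleftrightarrow> (\<exists>x s. x\<in>V \<and> (\<exists>y\<in>V. E x y) \<and> s<n \<and> k<n \<and> \<alpha> x = {(s+i) mod n | i. i \<le> k})" for k
  have "\<exists>k. P k"
  proof -
    from assms(2) obtain x y where "x\<in>V" "y\<in>V" "E x y" by blast
    moreover obtain s k where "s<n" "k<n" "\<alpha> x = {(s + i) mod n | i. i \<le> k}"
      using arcs[OF \<open>x\<in>V\<close>] unfolding is_arc_def by blast
    ultimately show ?thesis unfolding P_def by blast
  qed
  then obtain k where Pk: "P k" and kmin: "\<And>k'. k' < k \<Longrightarrow> \<not> P k'"
    using exists_least_iff[of P] by blast
  then obtain u s where u: "u\<in>V" "\<exists>y\<in>V. E u y" "s<n" "k<n"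
    and au: "\<alpha> u = {(s+i) mod n | i. i \<le> k}" unfolding P_def by blast
  have kle: "\<And>x s' k'. x\<in>V \<Longrightarrow> E u x \<Longrightarrow> s'<n \<Longrightarrow> k'<n \<Longrightarrow> \<alpha> x = {(s'+i) mod n | i. i \<le> k'} \<Longrightarrow> k \<le> k'"
  proof -
    fix x s' k' assume h: "x\<in>V" "E u x" "s'<n" "k'<n" "\<alpha> x = {(s'+i) mod n | i. i \<le> k'}"
    have "E x u" using sym h u by blast
    then have "P k'" unfolding P_def using h u by blast
    then show "k \<le> k'" using kmin by (meson not_less)
  qed
  define T where "T x = {i. i \<le> k \<and> (s+i) mod n \<in> \<alpha> x}" for x
  have Tsub: "\<And>x. T x \<subseteq> {..k}" unfolding T_def by auto
  have Tco: "\<And>x j. x\<in>V \<Longrightarrow> E u x \<Longrightarrow> j \<in> T x \<Longrightarrow> (\<forall>i\<le>j. i \<in> T x) \<or> (\<forall>i. j \<le> i \<and> i \<le> k \<longrightarrow> i \<in> T x)"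
  proof -
    fix x j assume h: "x\<in>V" "E u x" "j \<in> T x"
    obtain s' k' where sk: "s'<n" "k'<n" "\<alpha> x = {(s' + i) mod n | i. i \<le> k'}"
      using arcs[OF h(1)] unfolding is_arc_def by blast
    have "k \<le> k'" using kle[OF h(1,2) sk] .
    from arc_coint[OF this, of j s n s'] h(3) sk(3)
    show "(\<forall>i\<le>j. i \<in> T x) \<or> (\<forall>i. j \<le> i \<and> i \<le> k \<longrightarrow> i \<in> T x)"
      unfolding T_def by auto
  qed
  have Tne: "\<And>x. x\<in>V \<Longrightarrow> E u x \<Longrightarrow> T x \<noteq> {}"
  proof -
    fix x assume h: "x\<in>V" "E u x"
    then obtain p where "p \<in> \<alpha> u" "p \<in> \<alpha> x" using adj2[OF u(1) h] by blast
    then show "T x \<noteq> {}" unfolding T_def using au by auto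
  qed
  have Tint: "\<And>x y. x\<in>V \<Longrightarrow> y\<in>V \<Longrightarrow> x\<noteq>y \<Longrightarrow> T x \<inter> T y \<noteq> {} \<Longrightarrow> E x y"
  proof -
    fix x y assume h: "x\<in>V" "y\<in>V" "x\<noteq>y" "T x \<inter> T y \<noteq> {}"
    then have "\<alpha> x \<inter> \<alpha> y \<noteq> {}" unfolding T_def by auto
    then show "E x y" using adj h by blast
  qed
  define Pre where "Pre = {x\<in>V. E u x \<and> 0 \<in> T x \<and> k \<notin> T x}"
  have Preform: "\<And>x i. x \<in> Pre \<Longrightarrow> i \<le> Max (T x) \<Longrightarrow> i \<in> T x"
  proof -
    fix x i assume h: "x \<in> Pre" "i \<le> Max (T x)"
    have fin: "finite (T x)" using Tsub finite_subset by blast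
    have ne: "T x \<noteq> {}" using h(1) unfolding Pre_def by blast
    have mx: "Max (T x) \<in> T x" using Max_in[OF fin ne] .
    have "Max (T x) \<le> k" using mx Tsub by auto
    moreover have "k \<notin> T x" using h(1) unfolding Pre_def by blast
    ultimately have "\<forall>i\<le>Max (T x). i \<in> T x" using Tco[of x "Max (T x)"] mx h(1) unfolding Pre_def by blast
    then show "i \<in> T x" using h(2) by blast
  qed
  obtain v where v: "v\<in>V" "E u v" and vmin: "\<And>x. x \<in> Pre \<Longrightarrow> T v \<subseteq> T x"
  proof (cases "Pre = {}")
    case True
    then show ?thesis using that u(2) by blast
  next
    case False
    then obtain x0 where "x0 \<in> Pre" by blast
    then obtain v where vP: "v \<in> Pre" and vm: "\<And>y. y \<in> Pre \<Longrightarrow> Max (T v) \<le> Max (T y)"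
      using ex_has_least_nat[of "\<lambda>x. x \<in> Pre" x0 "\<lambda>x. Max (T x)"] by blast
    have "\<And>y. y \<in> Pre \<Longrightarrow> T v \<subseteq> T y"
    proof
      fix y j assume y: "y \<in> Pre" and j: "j \<in> T v"
      have fin: "finite (T v)" using Tsub finite_subset by blast
      have "j \<le> Max (T v)" using Max_ge[OF fin j] .
      also have "\<dots> \<le> Max (T y)" using vm[OF y] .
      finally show "j \<in> T y" using Preform[OF y] by blast
    qed
    then show ?thesis using that vP unfolding Pre_def by blast
  qed
  have uv: "u \<noteq> v" using irr v u by blast
  have common: "\<And>w. w\<in>V \<Longrightarrow> E u w \<Longrightarrow> E v w \<Longrightarrow> w \<noteq> u \<Longrightarrow> w \<noteq> v \<Longrightarrow> T w \<inter> T v \<noteq> {}"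
  proof -
    fix w assume h: "w\<in>V" "E u w" "E v w" "w \<noteq> u" "w \<noteq> v"
    have F: "{u, v, w} \<subseteq> V" using h u v by blast
    have p1: "\<alpha> u \<inter> \<alpha> v \<noteq> {} \<and> \<alpha> v \<inter> \<alpha> u \<noteq> {}" using adj2[OF u(1) v(1) v(2)] .
    have p2: "\<alpha> u \<inter> \<alpha> w \<noteq> {} \<and> \<alpha> w \<inter> \<alpha> u \<noteq> {}" using adj2[OF u(1) h(1) h(2)] .
    have p3: "\<alpha> v \<inter> \<alpha> w \<noteq> {} \<and> \<alpha> w \<inter> \<alpha> v \<noteq> {}" using adj2[OF v(1) h(1) h(3)] .
    have "\<alpha> u \<inter> \<alpha> u \<noteq> {}" "\<alpha> v \<inter> \<alpha> v \<noteq> {}" "\<alpha> w \<inter> \<alpha> w \<noteq> {}"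
      using ane[OF u(1)] ane[OF v(1)] ane[OF h(1)] by simp_all
    then have pw: "\<forall>a\<in>{u,v,w}. \<forall>b\<in>{u,v,w}. \<alpha> a \<inter> \<alpha> b \<noteq> {}"
      using p1 p2 p3 by (simp only: ball_simps insert_iff) blast
    have "\<exists>p<n. \<forall>x\<in>{u,v,w}. p \<in> \<alpha> x"
      using helly F pw unfolding helly_family_def by (elim allE[of _ "{u,v,w}"]) (erule impE, assumption, erule mp)
    then obtain p where "\<forall>x\<in>{u,v,w}. p \<in> \<alpha> x" by blast
    then have pu: "p \<in> \<alpha> u" and pv: "p \<in> \<alpha> v" and pw': "p \<in> \<alpha> w" by simp_all
    from pu obtain i where i: "p = (s + i) mod n" "i \<le> k" unfolding au by blast
    have "i \<in> T w" "i \<in> T v" unfolding T_def using i pv pw' by simp_all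
    then show "T w \<inter> T v \<noteq> {}" by blast
  qed
  have key: "\<And>w1 w2. w1\<in>V \<Longrightarrow> w2\<in>V \<Longrightarrow> E u w1 \<Longrightarrow> E u w2 \<Longrightarrow> T w1 \<inter> T v \<noteq> {} \<Longrightarrow> T w2 \<inter> T v \<noteq> {} \<Longrightarrow> T w1 \<inter> T w2 \<noteq> {}"
  proof
    fix w1 w2 assume h: "w1\<in>V" "w2\<in>V" "E u w1" "E u w2" "T w1 \<inter> T v \<noteq> {}" "T w2 \<inter> T v \<noteq> {}"
      and d: "T w1 \<inter> T w2 = {}"
    have D: "(0 \<in> T w1 \<and> k \<notin> T w1 \<and> k \<in> T w2 \<and> 0 \<notin> T w2) \<or> (0 \<in> T w2 \<and> k \<notin> T w2 \<and> k \<in> T w1 \<and> 0 \<notin> T w1)"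
      using disj_coint[OF Tsub Tsub Tne[OF h(1,3)] Tne[OF h(2,4)] Tco[OF h(1,3)] Tco[OF h(2,4)] d] .
    show False
    proof (cases "0 \<in> T w1 \<and> k \<notin> T w1 \<and> k \<in> T w2 \<and> 0 \<notin> T w2")
      case True
      then have "w1 \<in> Pre" unfolding Pre_def using h by blast
      then have sub: "T v \<subseteq> T w1" using vmin by blast
      obtain j where j: "j \<in> T w2" "j \<in> T v" using h(6) by blast
      have "j \<le> k" using j Tsub by auto
      have "\<forall>i. j \<le> i \<and> i \<le> k \<longrightarrow> i \<in> T w2" using Tco[OF h(2,4) j(1)] True by blast
      then have "j \<in> T w2" using \<open>j \<le> k\<close> by blast
      then show False using sub j d by blast
    next
      case False
      then have F2: "0 \<in> T w2 \<and> k \<notin> T w2 \<and> k \<in> T w1 \<and> 0 \<notin> T w1" using D by blast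
      then have "w2 \<in> Pre" unfolding Pre_def using h by blast
      then have sub: "T v \<subseteq> T w2" using vmin by blast
      obtain j where j: "j \<in> T w1" "j \<in> T v" using h(5) by blast
      then show False using sub d by blast
    qed
  qed
  define K where "K = {w\<in>V. w = u \<or> w = v \<or> (E u w \<and> E v w)}"
  have Kcl: "clique V E K"
    unfolding clique_def
  proof (intro conjI ballI impI)
    show "K \<subseteq> V" unfolding K_def by blast
  next
    fix a b assume a: "a \<in> K" and b: "b \<in> K" and ab: "a \<noteq> b"
    have aV: "a \<in> V" and bV: "b \<in> V" using a b unfolding K_def by auto
    have Evu: "E v u" using sym u v by blast
    show "E a b"
    proof (cases "a = u \<or> a = v \<or> b = u \<or> b = v")
      case True
      have Kd: "a = u \<or> a = v \<or> (E u a \<and> E v a)" "b = u \<or> b = v \<or> (E u b \<and> E v b)"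
        using a b unfolding K_def by auto
      have Euv: "E u v" using v by blast
      show ?thesis
      proof (cases "a = u")
        case au': True
        then show ?thesis using Kd(2) ab Euv by blast
      next
        case False
        show ?thesis
        proof (cases "a = v")
          case True
          then show ?thesis using Kd(2) ab Evu by blast
        next
          case False
          then have "E u a" "E v a" using Kd(1) \<open>a \<noteq> u\<close> by blast+
          then have "E a u" "E a v" using sym aV u(1) v(1) by blast+
          then show ?thesis using True \<open>a \<noteq> u\<close> False by blast
        qed
      qed
    next
      case False
      then have ha: "E u a" "E v a" and hb: "E u b" "E v b" using a b unfolding K_def by auto
      have "T a \<inter> T v \<noteq> {}" using common[OF aV ha] False by blast
      moreover have "T b \<inter> T v \<noteq> {}" using common[OF bV hb] False by blast
      ultimately have "T a \<inter> T b \<noteq> {}" using key[OF aV bV ha(1) hb(1)] by blast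
      then show ?thesis using Tint aV bV ab by blast
    qed
  qed
  have sub: "\<And>D. clique V E D \<Longrightarrow> u \<in> D \<Longrightarrow> v \<in> D \<Longrightarrow> D \<subseteq> K"
  proof
    fix D x assume D: "clique V E D" "u \<in> D" "v \<in> D" and x: "x \<in> D"
    show "x \<in> K"
    proof (cases "x = u \<or> x = v")
      case True then show ?thesis using u v unfolding K_def by blast
    next
      case False
      then have "E u x" "E v x" using D x unfolding clique_def by auto
      moreover have "x \<in> V" using D x unfolding clique_def by auto
      ultimately show ?thesis unfolding K_def by blast
    qed
  qed
  have uK: "u \<in> K" and vK: "v \<in> K" using u v unfolding K_def by auto
  have Kmax: "maxclique V E K"
    unfolding maxclique_def using Kcl sub uK vK by blast
  have "essential_edge V E u v"
    unfolding essential_edge_def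
  proof (intro conjI)
    show "u \<in> V" "v \<in> V" "E u v" using u v by auto
    show "\<exists>!C. maxclique V E C \<and> u \<in> C \<and> v \<in> C"
    proof (rule ex1I[of _ K])
      show "maxclique V E K \<and> u \<in> K \<and> v \<in> K" using Kmax uK vK by blast
    next
      fix C assume C: "maxclique V E C \<and> u \<in> C \<and> v \<in> C"
      then have "C \<subseteq> K" using sub unfolding maxclique_def by blast
      then show "C = K" using C Kcl unfolding maxclique_def by blast
    qed
  qed
  then show ?thesis using u v by blast
qed

end
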